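(* Let $n\ge 2$ and $\alpha=\pi/4$. For all $u,v\in\mathrm{Sym}(n)$, if $u<_B v$ then $\mathrm{B}^{\pi/4}_n(u)\prec \mathrm{B}^{\pi/4}_n(v)$.
   Context: $\mathrm{Sym}(n)$ is the group of permutations of $\{1,\dots,n\}$, written on the right: $(i)w$ is the image of $i$ under $w$, and $uv$ means "first $u$, then $v$". It is a Coxeter group with generators $s_i=(i,i+1)$, length function $\ell$, and set of reflections $T$ = all transpositions. The Bruhat order $<_B$ is the transitive closure of the relation $w<_B wt$ for $t\in T$ with $\ell(wt)=\ell(w)+1$. Borders: fix $n\ge2$ and $\alpha\in(0,\pi/2)$. For $k=1,\dots,n$ let $\theta_k=\frac{(k-1)(\pi-2\alpha)}{n-1}+\alpha$ and $\beta^k_n=(-\cos\theta_k,\ \sin\theta_k)\in\mathbb{R}^2$. For $w\in\mathrm{Sym}(n)$ and $i=0,\dots,n$ put $p_i(w)=\sum_{j=1}^{i}\beta_n^{(j)w^{-1}}$ (so $p_0(w)=0$). The border $\mathrm{B}^\alpha_n(w)$ is the polygonal path $\bigcup_{i=1}^n[p_{i-1}(w),p_i(w)]$ (its $i$-th edge being the segment $[p_{i-1}(w),p_i(w)]$). Since every $\beta^k_n$ has positive $y$-coordinate, the $y$-coordinate is strictly increasing along the path from $0$ to $h^\alpha_n=\sum_{k=1}^n\sin\theta_k$, so for each $y\in[0,h^\alpha_n]$ there is a unique point of $\mathrm{B}^\alpha_n(w)$ with $y$-coordinate $y$; denote its $x$-coordinate by $\mathrm{H}(\mathrm{B}^\alpha_n(w),y)$.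 For $u,v\in\mathrm{Sym}(n)$ we write $\mathrm{B}^\alpha_n(u)\prec\mathrm{B}^\alpha_n(v)$ ("precedes") if $\mathrm{H}(\mathrm{B}^\alpha_n(u),y)\le \mathrm{H}(\mathrm{B}^\alpha_n(v),y)$ for all $0\le y\le h^\alpha_n$. *)

theory Defs
  imports "HOL-Analysis.Analysis" "HOL-Combinatorics.Permutations"
begin

text \<open>Elements of Sym(n) are functions nat => nat that permute {1..n}.
  Permutations act on the right: (i)w = w i, and uv ("first u, then v") is the
  function v o u.\<close>

definition sgen :: "nat \<Rightarrow> nat \<Rightarrow> nat" where
  "sgen i = Transposition.transpose i (Suc i)"

fun word_perm :: "nat list \<Rightarrow> (nat \<Rightarrow> nat)" where
  "word_perm [] = id"
| "word_perm (i # is) = word_perm is \<circ> sgen i"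

definition cox_len :: "nat \<Rightarrow> (nat \<Rightarrow> nat) \<Rightarrow> nat" where
  "cox_len n w = (LEAST k. \<exists>xs. length xs = k \<and> set xs \<subseteq> {1..<n} \<and> word_perm xs = w)"

text \<open>w <_B wt for a transposition t with l(wt) = l(w)+1; (i)(wt) = t((i)w).\<close>
definition bruhat_step :: "nat \<Rightarrow> (nat \<Rightarrow> nat) \<Rightarrow> (nat \<Rightarrow> nat) \<Rightarrow> bool" where
  "bruhat_step n w w' \<longleftrightarrow>
     (\<exists>a b. a \<in> {1..n} \<and> b \<in> {1..n} \<and> a \<noteq> b \<and>
        w' = Transposition.transpose a b \<circ> w \<and> cox_len n w' = cox_len n w + 1)"

definition bruhat_less :: "nat \<Rightarrow> (nat \<Rightarrow> nat) \<Rightarrow> (nat \<Rightarrow> nat) \<Rightarrow> bool" where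
  "bruhat_less n = (bruhat_step n)\<^sup>+\<^sup>+"

definition theta :: "nat \<Rightarrow> real \<Rightarrow> nat \<Rightarrow> real" where
  "theta n \<alpha> k = real (k - 1) * (pi - 2 * \<alpha>) / real (n - 1) + \<alpha>"

definition beta :: "nat \<Rightarrow> real \<Rightarrow> nat \<Rightarrow> real \<times> real" where
  "beta n \<alpha> k = (- cos (theta n \<alpha> k), sin (theta n \<alpha> k))"

definition bpt :: "nat \<Rightarrow> real \<Rightarrow> (nat \<Rightarrow> nat) \<Rightarrow> nat \<Rightarrow> real \<times> real" where
  "bpt n \<alpha> w i = (\<Sum>j = 1..i. beta n \<alpha> (inv w j))"

definition border :: "nat \<Rightarrow> real \<Rightarrow> (nat \<Rightarrow> nat) \<Rightarrow> (real \<times> real) set" where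
  "border n \<alpha> w = (\<Union>i \<in> {1..n}. closed_segment (bpt n \<alpha> w (i - 1)) (bpt n \<alpha> w i))"

definition height :: "nat \<Rightarrow> real \<Rightarrow> real" where
  "height n \<alpha> = (\<Sum>k = 1..n. sin (theta n \<alpha> k))"

definition Hx :: "(real \<times> real) set \<Rightarrow> real \<Rightarrow> real" where
  "Hx B y = (THE x. (x, y) \<in> B)"

definition precedes :: "nat \<Rightarrow> real \<Rightarrow> (nat \<Rightarrow> nat) \<Rightarrow> (nat \<Rightarrow> nat) \<Rightarrow> bool" where
  "precedes n \<alpha> u v \<longleftrightarrow>
     (\<forall>y. 0 \<le> y \<and> y \<le> height n \<alpha> \<longrightarrow> Hx (border n \<alpha> u) y \<le> Hx (border n \<alpha> v) y)"

end

theory Submission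
  imports Defs
begin


definition invs :: "nat \<Rightarrow> (nat\<Rightarrow>nat) \<Rightarrow> (nat\<times>nat) set" where
  "invs n f = {(i,j). i \<in> {1..n} \<and> j \<in> {1..n} \<and> i < j \<and> f i > f j}"

lemma invs_finite: "finite (invs n f)"
proof -
  have "invs n f \<subseteq> {1..n} \<times> {1..n}" by (auto simp: invs_def)
  then show ?thesis by (rule finite_subset) auto
qed

lemma invs_step_le:
  assumes "i \<in> {1..<n}"
  shows "card (invs n (f \<circ> sgen i)) \<le> card (invs n f) + 1"
proof -
  let ?s = "sgen i"
  let ?m = "\<lambda>(a,b). (?s a, ?s b)"
  have sub: "invs n (f \<circ> ?s) \<subseteq> insert (i, Suc i) (?m ` invs n f)"
  proof
    fix x assume x: "x \<in> invs n (f \<circ> ?s)"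
    obtain a b where ab: "x = (a,b)" by (cases x)
    show "x \<in> insert (i, Suc i) (?m ` invs n f)"
    proof (cases "x = (i, Suc i)")
      case True then show ?thesis by simp
    next
      case False
      have "(?s a, ?s b) \<in> invs n f"
        using x False assms unfolding ab invs_def sgen_def
        by (auto simp: Transposition.transpose_def split: if_splits)
      moreover have "x = ?m (?s a, ?s b)" by (simp add: ab sgen_def)
      ultimately show ?thesis by blast
    qed
  qed
  have "card (invs n (f \<circ> ?s)) \<le> card (insert (i, Suc i) (?m ` invs n f))"
    by (rule card_mono) (simp_all add: invs_finite sub)
  also have "\<dots> \<le> card (?m ` invs n f) + 1"
    by (simp add: card_insert_le_m1 card_insert_if invs_finite)
  also have "\<dots> \<le> card (invs n f) + 1"
    using card_image_le[OF invs_finite] by simp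
  finally show ?thesis .
qed

lemma invs_transp_lt:
  assumes pq: "p < q" "p \<in> {1..n}" "q \<in> {1..n}" and f: "f p > f q"
  shows "card (invs n (f \<circ> Transposition.transpose p q)) < card (invs n f)"
proof -
  let ?t = "Transposition.transpose p q"
  define \<phi> where "\<phi> = (\<lambda>(i,j). if ?t i < ?t j then (?t i, ?t j) else (i::nat, j::nat))"
  have inj: "inj_on \<phi> (invs n (f \<circ> ?t))"
  proof (rule inj_onI)
    fix x y assume x: "x \<in> invs n (f \<circ> ?t)" and y: "y \<in> invs n (f \<circ> ?t)" and e: "\<phi> x = \<phi> y"
    obtain i j where ij: "x = (i,j)" by (cases x)
    obtain k l where kl: "y = (k,l)" by (cases y)
    show "x = y" using x y e unfolding ij kl \<phi>_def invs_def
      by (auto split: if_splits simp: Transposition.transpose_def)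
  qed
  have img: "\<phi> ` invs n (f \<circ> ?t) \<subseteq> invs n f - {(p,q)}"
  proof
    fix z assume "z \<in> \<phi> ` invs n (f \<circ> ?t)"
    then obtain i j where ij: "(i,j) \<in> invs n (f \<circ> ?t)" and z: "z = \<phi> (i,j)" by auto
    show "z \<in> invs n f - {(p,q)}"
      using ij pq f unfolding z \<phi>_def invs_def
      by (auto split: if_splits simp: Transposition.transpose_def)
  qed
  have "card (invs n (f \<circ> ?t)) \<le> card (invs n f - {(p,q)})"
    by (rule card_inj_on_le[OF inj img]) (simp add: invs_finite)
  moreover have "(p,q) \<in> invs n f" using pq f by (auto simp: invs_def)
  then have "card (invs n f - {(p,q)}) < card (invs n f)"
    by (metis card_Diff1_less invs_finite)
  ultimately show ?thesis by linarith
qed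

lemma chain_le:
  assumes "\<forall>i. p \<le> i \<and> i < q \<longrightarrow> w i \<le> (w (Suc i) :: nat)" "p \<le> q"
  shows "w p \<le> w q"
  using assms
proof (induction q)
  case 0 then show ?case by simp
next
  case (Suc q)
  show ?case
  proof (cases "p = Suc q")
    case True then show ?thesis by simp
  next
    case False
    then have "p \<le> q" using Suc by simp
    then have "w p \<le> w q" using Suc by simp
    also have "w q \<le> w (Suc q)" using Suc.prems \<open>p \<le> q\<close> by simp
    finally show ?thesis .
  qed
qed

lemma descent:
  assumes "invs n w \<noteq> {}"
  shows "\<exists>i \<in> {1..<n}. w i > w (Suc i)"
proof (rule ccontr)
  assume no: "\<not> ?thesis"
  obtain p q where pq: "(p,q) \<in> invs n w" using assms by auto
  then have "p < q" "1 \<le> p" "q \<le> n" "w p > w q" by (auto simp: invs_def)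
  have "\<forall>i. p \<le> i \<and> i < q \<longrightarrow> w i \<le> w (Suc i)"
    using no \<open>p < q\<close> \<open>1 \<le> p\<close> \<open>q \<le> n\<close> by (auto simp: not_less)
  then have "w p \<le> w q" using chain_le \<open>p < q\<close> by simp
  then show False using \<open>w p > w q\<close> by simp
qed

lemma zero_id:
  assumes w: "w permutes {1..n}" and z: "invs n w = {}"
  shows "w = id"
proof -
  have "\<forall>i. 1 \<le> i \<longrightarrow> i \<le> n \<longrightarrow> i \<le> w i"
  proof
    fix i show "1 \<le> i \<longrightarrow> i \<le> n \<longrightarrow> i \<le> w i"
    proof (induction i)
      case 0 then show ?case by simp
    next
      case (Suc i)
      show ?case
      proof (intro impI)
        assume h: "1 \<le> Suc i" "Suc i \<le> n"
        show "Suc i \<le> w (Suc i)"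
        proof (cases "i = 0")
          case True
          have "w 1 \<in> {1..n}" using permutes_in_image[OF w] h True by auto
          then show ?thesis using True by simp
        next
          case False
          then have "i \<le> w i" using Suc h by simp
          moreover have "\<not> w i > w (Suc i)"
          proof
            assume "w i > w (Suc i)"
            then have "(i, Suc i) \<in> invs n w" using h False by (simp add: invs_def)
            then show False using z by simp
          qed
          moreover have "w i \<noteq> w (Suc i)" using permutes_inj[OF w] by (metis injD n_not_Suc_n)
          ultimately show ?thesis by simp
        qed
      qed
    qed
  qed
  then have "\<forall>i\<in>{1..n}. i \<le> w i" by simp
  then show ?thesis by (rule permutes_natset_ge[OF w])
qed

lemma sgen_permutes: "i \<in> {1..<n} \<Longrightarrow> sgen i permutes {1..n}"
  unfolding sgen_def by (rule permutes_swap_id) auto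

lemma word_exists:
  assumes "w permutes {1..n}"
  shows "\<exists>xs. set xs \<subseteq> {1..<n} \<and> word_perm xs = w \<and> length xs \<le> card (invs n w)"
  using assms
proof (induction "card (invs n w)" arbitrary: w rule: less_induct)
  case less
  show ?case
  proof (cases "invs n w = {}")
    case True
    then have "w = id" using zero_id less.prems by blast
    then show ?thesis by (intro exI[of _ "[]"]) simp
  next
    case False
    then obtain i where i: "i \<in> {1..<n}" "w i > w (Suc i)" using descent by blast
    let ?w = "w \<circ> sgen i"
    have lt: "card (invs n ?w) < card (invs n w)"
      using invs_transp_lt[of i "Suc i" n w] i unfolding sgen_def by auto
    have "?w permutes {1..n}" using less.prems sgen_permutes[OF i(1)] permutes_compose by blast
    then obtain xs where xs: "set xs \<subseteq> {1..<n}" "word_perm xs = ?w" "length xs \<le> card (invs n ?w)"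
      using less.hyps[OF lt] by blast
    have "word_perm (i # xs) = w"
      using xs(2) by (auto simp: fun_eq_iff sgen_def)
    then show ?thesis using xs i lt by (intro exI[of _ "i # xs"]) auto
  qed
qed

lemma word_lower:
  "set xs \<subseteq> {1..<n} \<Longrightarrow> card (invs n (word_perm xs)) \<le> length xs"
proof (induction xs)
  case Nil
  have "invs n (word_perm []) = {}" by (auto simp: invs_def)
  then show ?case by (simp only: card.empty)
next
  case (Cons i xs)
  then have "card (invs n (word_perm xs \<circ> sgen i)) \<le> card (invs n (word_perm xs)) + 1"
    using invs_step_le[of i n "word_perm xs"] by simp
  moreover have "card (invs n (word_perm xs)) \<le> length xs" using Cons by simp
  ultimately show ?case by (simp only: word_perm.simps list.size)
qed

lemma cox_len_eq:
  assumes "w permutes {1..n}"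
  shows "cox_len n w = card (invs n w)"
proof -
  obtain xs where xs: "set xs \<subseteq> {1..<n}" "word_perm xs = w" "length xs \<le> card (invs n w)"
    using word_exists[OF assms] by blast
  let ?P = "\<lambda>k. \<exists>xs. length xs = k \<and> set xs \<subseteq> {1..<n} \<and> word_perm xs = w"
  have P: "?P (length xs)" using xs by blast
  have L1: "(LEAST k. ?P k) \<le> length xs" by (rule Least_le[of ?P, OF P])
  have L2: "?P (LEAST k. ?P k)" by (rule LeastI[of ?P, OF P])
  then obtain ys where ys: "length ys = (LEAST k. ?P k)" "set ys \<subseteq> {1..<n}" "word_perm ys = w"
    by (elim exE conjE) simp
  have L3: "card (invs n w) \<le> (LEAST k. ?P k)" using word_lower[OF ys(2)] ys(1,3) by simp
  have "cox_len n w = (LEAST k. ?P k)" unfolding cox_len_def by (rule refl)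
  then show ?thesis using L1 L3 xs(3) by linarith
qed



definition pts :: "(nat \<Rightarrow> real \<times> real) \<Rightarrow> nat \<Rightarrow> real \<times> real" where
  "pts e i = (\<Sum>j = 1..i. e j)"

definition curve :: "nat \<Rightarrow> (nat \<Rightarrow> real \<times> real) \<Rightarrow> (real \<times> real) set" where
  "curve n e = (\<Union>i \<in> {1..n}. closed_segment (pts e (i - 1)) (pts e i))"

lemma pts_0 [simp]: "pts e 0 = 0"
  by (simp add: pts_def)

lemma pts_Suc: "pts e (Suc i) = pts e i + e (Suc i)"
  by (simp add: pts_def)

lemma pts_pred: "i \<ge> 1 \<Longrightarrow> pts e i = pts e (i - 1) + e i"
  using pts_Suc[of e "i - 1"] by simp

lemma seg_iff:
  assumes "i \<ge> 1"
  shows "z \<in> closed_segment (pts e (i - 1)) (pts e i) \<longleftrightarrow>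
         (\<exists>u. 0 \<le> u \<and> u \<le> 1 \<and> z = pts e (i - 1) + u *\<^sub>R e i)"
  unfolding closed_segment_def pts_pred[OF assms, of e]
  by (auto simp: algebra_simps)

lemma curve_iff:
  "z \<in> curve n e \<longleftrightarrow> (\<exists>i u. 1 \<le> i \<and> i \<le> n \<and> 0 \<le> u \<and> u \<le> 1 \<and> z = pts e (i - 1) + u *\<^sub>R e i)"
proof -
  have "z \<in> curve n e \<longleftrightarrow> (\<exists>i\<in>{1..n}. z \<in> closed_segment (pts e (i - 1)) (pts e i))"
    by (simp add: curve_def)
  also have "\<dots> \<longleftrightarrow> (\<exists>i\<in>{1..n}. \<exists>u. 0 \<le> u \<and> u \<le> 1 \<and> z = pts e (i - 1) + u *\<^sub>R e i)"
    by (rule bex_cong[OF refl]) (rule seg_iff, simp)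
  also have "\<dots> \<longleftrightarrow> (\<exists>i u. 1 \<le> i \<and> i \<le> n \<and> 0 \<le> u \<and> u \<le> 1 \<and> z = pts e (i - 1) + u *\<^sub>R e i)"
    by auto
  finally show ?thesis .
qed

lemma pts_cone:
  assumes cone: "\<forall>j\<in>{1..n}. \<bar>fst (e j)\<bar> \<le> snd (e j)"
  shows "i \<le> j \<Longrightarrow> j \<le> n \<Longrightarrow> \<bar>fst (pts e j - pts e i)\<bar> \<le> snd (pts e j - pts e i)"
proof (induction j)
  case 0 then show ?case by simp
next
  case (Suc j)
  show ?case
  proof (cases "i = Suc j")
    case True then show ?thesis by simp
  next
    case False
    then have IH: "\<bar>fst (pts e j - pts e i)\<bar> \<le> snd (pts e j - pts e i)" using Suc by simp
    have c: "\<bar>fst (e (Suc j))\<bar> \<le> snd (e (Suc j))" using cone Suc.prems by auto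
    have "pts e (Suc j) - pts e i = (pts e j - pts e i) + e (Suc j)" by (simp add: pts_Suc)
    then show ?thesis using IH c by (simp add: abs_le_iff)
  qed
qed

lemma curve_cone_aux:
  assumes cone: "\<forall>j\<in>{1..n}. \<bar>fst (e j)\<bar> \<le> snd (e j)"
    and ij: "1 \<le> i" "i \<le> j" "j \<le> n" and uv: "0 \<le> u" "u \<le> 1" "0 \<le> v" "v \<le> 1"
    and ord: "i < j \<or> u \<le> v"
    and z1: "z1 = pts e (i - 1) + u *\<^sub>R e i" and z2: "z2 = pts e (j - 1) + v *\<^sub>R e j"
  shows "\<bar>fst z2 - fst z1\<bar> \<le> snd z2 - snd z1"
proof (cases "i < j")
  case True
  have pi: "pts e i = pts e (i - 1) + e i" using pts_pred ij by simp
  have eq: "z2 - z1 = (pts e (j - 1) - pts e i) + (1 - u) *\<^sub>R e i + v *\<^sub>R e j"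
    using z1 z2 pi by (simp add: algebra_simps)
  have f: "fst z2 - fst z1 = fst (pts e (j - 1) - pts e i) + fst ((1 - u) *\<^sub>R e i) + fst (v *\<^sub>R e j)"
    using arg_cong[OF eq, of fst] by simp
  have g: "snd z2 - snd z1 = snd (pts e (j - 1) - pts e i) + snd ((1 - u) *\<^sub>R e i) + snd (v *\<^sub>R e j)"
    using arg_cong[OF eq, of snd] by simp
  have "\<bar>fst (pts e (j - 1) - pts e i)\<bar> \<le> snd (pts e (j - 1) - pts e i)"
    using pts_cone[OF cone, of i "j - 1"] True ij by simp
  moreover have "\<bar>fst ((1 - u) *\<^sub>R e i)\<bar> \<le> snd ((1 - u) *\<^sub>R e i)"
    using cone ij uv by (auto simp: abs_mult intro: mult_left_mono)
  moreover have "\<bar>fst (v *\<^sub>R e j)\<bar> \<le> snd (v *\<^sub>R e j)"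
    using cone ij uv by (auto simp: abs_mult intro: mult_left_mono)
  ultimately show ?thesis unfolding f g by (simp only: abs_le_iff) linarith
next
  case False
  then have "i = j" "u \<le> v" using ij ord by auto
  then have eq: "z2 - z1 = (v - u) *\<^sub>R e i" using z1 z2 by (simp add: algebra_simps)
  have f: "fst z2 - fst z1 = fst ((v - u) *\<^sub>R e i)" using arg_cong[OF eq, of fst] by simp
  have g: "snd z2 - snd z1 = snd ((v - u) *\<^sub>R e i)" using arg_cong[OF eq, of snd] by simp have "\<bar>fst ((v - u) *\<^sub>R e i)\<bar> \<le> snd ((v - u) *\<^sub>R e i)"
    using cone ij \<open>u \<le> v\<close> by (auto simp: abs_mult intro: mult_left_mono)
  then show ?thesis unfolding f g .
qed

lemma curve_cone:
  assumes cone: "\<forall>j\<in>{1..n}. \<bar>fst (e j)\<bar> \<le> snd (e j)"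
    and z1: "z1 \<in> curve n e" and z2: "z2 \<in> curve n e"
  shows "\<bar>fst z1 - fst z2\<bar> \<le> \<bar>snd z1 - snd z2\<bar>"
proof -
  obtain i u where iu: "1 \<le> i" "i \<le> n" "0 \<le> u" "u \<le> 1" "z1 = pts e (i - 1) + u *\<^sub>R e i"
    using z1 curve_iff by blast
  obtain j v where jv: "1 \<le> j" "j \<le> n" "0 \<le> v" "v \<le> 1" "z2 = pts e (j - 1) + v *\<^sub>R e j"
    using z2 curve_iff by blast
  show ?thesis
  proof (cases "i < j \<or> (i = j \<and> u \<le> v)")
    case True
    then have "\<bar>fst z2 - fst z1\<bar> \<le> snd z2 - snd z1"
      using curve_cone_aux[OF cone, of i j u v z1 z2] iu jv by auto
    then show ?thesis by linarith
  next
    case False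
    then have "j < i \<or> (j = i \<and> v \<le> u)" by auto
    then have "\<bar>fst z1 - fst z2\<bar> \<le> snd z1 - snd z2"
      using curve_cone_aux[OF cone, of j i v u z2 z1] iu jv by auto
    then show ?thesis by linarith
  qed
qed

lemma curve_unique:
  assumes cone: "\<forall>j\<in>{1..n}. \<bar>fst (e j)\<bar> \<le> snd (e j)"
    and "(x1, y) \<in> curve n e" "(x2, y) \<in> curve n e"
  shows "x1 = x2"
  using curve_cone[OF cone assms(2,3)] by simp

lemma Hx_eq:
  assumes cone: "\<forall>j\<in>{1..n}. \<bar>fst (e j)\<bar> \<le> snd (e j)"
    and "(x, y) \<in> curve n e"
  shows "Hx (curve n e) y = x"
  unfolding Hx_def using curve_unique[OF cone] assms(2) by blast

lemma curve_exists:
  assumes pos: "\<forall>j\<in>{1..n}. snd (e j) > 0"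
    and n: "n \<ge> 1" and y: "0 \<le> y" "y \<le> snd (pts e n)"
  shows "\<exists>x. (x, y) \<in> curve n e"
proof -
  define i where "i = (LEAST i. y \<le> snd (pts e i))"
  have yi: "y \<le> snd (pts e i)" unfolding i_def by (rule LeastI[of _ n]) (rule y(2))
  have "i \<le> n" unfolding i_def by (rule Least_le) (rule y(2))
  show ?thesis
  proof (cases "i = 0")
    case True
    then have "y = 0" using yi y by simp
    then have "(fst (pts e 0), y) = pts e (1 - 1) + 0 *\<^sub>R e 1" by (simp add: zero_prod_def)
    then show ?thesis using n curve_iff[of "(fst (pts e 0), y)" n e] by fastforce
  next
    case False
    then have "\<not> y \<le> snd (pts e (i - 1))" unfolding i_def
      by (metis diff_less i_def less_one not_less_Least not_gr_zero)
    then have lo: "snd (pts e (i - 1)) < y" by simp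
    have p: "pts e i = pts e (i - 1) + e i" using pts_pred False by simp
    have s: "snd (e i) > 0" using pos \<open>i \<le> n\<close> False by auto
    define u where "u = (y - snd (pts e (i - 1))) / snd (e i)"
    have u: "0 \<le> u" "u \<le> 1" using lo yi p s by (auto simp: u_def divide_simps)
    have "snd (pts e (i - 1) + u *\<^sub>R e i) = y" using s by (simp add: u_def)
    then have "(fst (pts e (i - 1) + u *\<^sub>R e i), y) = pts e (i - 1) + u *\<^sub>R e i"
      by (metis prod.collapse)
    then show ?thesis using curve_iff[of "(fst (pts e (i - 1) + u *\<^sub>R e i), y)" n e] u False \<open>i \<le> n\<close>
      by (metis One_nat_def Suc_leI not_gr_zero)
  qed
qed

lemma in_curve: "1 \<le> i \<Longrightarrow> i \<le> n \<Longrightarrow> 0 \<le> u \<Longrightarrow> u \<le> 1 \<Longrightarrow> pts e (i - 1) + u *\<^sub>R e i \<in> curve n e"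
  using curve_iff by blast

lemma pts_swap:
  assumes "1 \<le> a" "a < b"
  shows "pts (e \<circ> Transposition.transpose a b) j = pts e j + (if a \<le> j \<and> j < b then e b - e a else 0)"
proof (induction j)
  case 0 then show ?case using assms by simp
next
  case (Suc j)
  have "pts (e \<circ> Transposition.transpose a b) (Suc j) = pts (e \<circ> Transposition.transpose a b) j + e (Transposition.transpose a b (Suc j))"
    by (simp add: pts_Suc)
  also have "\<dots> = pts e j + (if a \<le> j \<and> j < b then e b - e a else 0) + e (Transposition.transpose a b (Suc j))"
    by (simp only: Suc.IH)
  also have "\<dots> = pts e (Suc j) + (if a \<le> Suc j \<and> Suc j < b then e b - e a else 0)"
    using assms by (auto simp: pts_Suc Transposition.transpose_def algebra_simps)
  finally show ?case .
qed

lemma compare: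
  assumes n: "n \<ge> 1" and ab: "1 \<le> a" "a < b" "b \<le> n"
    and cone: "\<forall>j\<in>{1..n}. \<bar>fst (e j)\<bar> \<le> snd (e j)"
    and pos: "\<forall>j\<in>{1..n}. snd (e j) > 0"
    and D: "\<bar>snd (e b) - snd (e a)\<bar> \<le> fst (e b) - fst (e a)"
    and S: "fst (e a) * snd (e b) \<le> fst (e b) * snd (e a)"
    and y: "0 \<le> y" "y \<le> snd (pts e n)"
  shows "Hx (curve n e) y \<le> Hx (curve n (e \<circ> Transposition.transpose a b)) y"
proof -
  define t where "t = Transposition.transpose a b"
  define e' where "e' = e \<circ> t"
  have tin: "t j \<in> {1..n}" if "j \<in> {1..n}" for j
    using that ab by (auto simp: t_def Transposition.transpose_def)
  have cone': "\<forall>j\<in>{1..n}. \<bar>fst (e' j)\<bar> \<le> snd (e' j)" using cone tin by (simp add: e'_def)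
  have pos': "\<forall>j\<in>{1..n}. snd (e' j) > 0" using pos tin by (simp add: e'_def)
  have ps: "pts e' j = pts e j + (if a \<le> j \<and> j < b then e b - e a else 0)" for j
    unfolding e'_def t_def using pts_swap ab by blast
  have "pts e' n = pts e n" using ps[of n] ab by simp
  then obtain gx where g: "(gx, y) \<in> curve n e'" using curve_exists[OF pos' n] y by auto
  obtain fx where f: "(fx, y) \<in> curve n e" using curve_exists[OF pos n] y by auto
  have Hf: "Hx (curve n e) y = fx" by (rule Hx_eq[OF cone f])
  have Hg: "Hx (curve n e') y = gx" by (rule Hx_eq[OF cone' g])
  obtain i u where iu: "1 \<le> i" "i \<le> n" "0 \<le> u" "u \<le> 1" and gp: "(gx, y) = pts e' (i - 1) + u *\<^sub>R e' i"
    using g curve_iff by blast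
  have gx: "gx = fst (pts e' (i - 1)) + u * fst (e' i)" and gy: "y = snd (pts e' (i - 1)) + u * snd (e' i)"
    using arg_cong[OF gp, of fst] arg_cong[OF gp, of snd] by simp_all
  define A where "A = e a"
  define B where "B = e b"
  have Apos: "snd A > 0" and Bpos: "snd B > 0" using pos ab by (auto simp: A_def B_def)
  have Ac: "\<bar>fst A\<bar> \<le> snd A" and Bc: "\<bar>fst B\<bar> \<le> snd B" using cone ab by (auto simp: A_def B_def)
  have cmp: "\<And>z. z \<in> curve n e \<Longrightarrow> \<bar>fx - fst z\<bar> \<le> \<bar>y - snd z\<bar>"
    using curve_cone[OF cone f] by fastforce
  have "fx \<le> gx"
  proof (cases "i < a \<or> b < i")
    case True
    then have "pts e' (i - 1) = pts e (i - 1)" "e' i = e i"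
      using ps[of "i - 1"] iu ab by (auto simp: e'_def t_def Transposition.transpose_def)
    then have "(gx, y) \<in> curve n e" using gp in_curve[OF iu, of e] by simp
    then show ?thesis using curve_unique[OF cone f] by simp
  next
    case False
    then consider "a < i \<and> i < b" | "i = a" | "i = b" by linarith
    then show ?thesis
    proof cases
      case 1
      then have p1: "pts e' (i - 1) = pts e (i - 1) + (B - A)" "e' i = e i"
        using ps[of "i - 1"] iu ab by (auto simp: e'_def t_def Transposition.transpose_def A_def B_def)
      define z where "z = pts e (i - 1) + u *\<^sub>R e i"
      have z: "z \<in> curve n e" unfolding z_def by (rule in_curve[OF iu])
      have "gx = fst z + (fst B - fst A)" "y = snd z + (snd B - snd A)"
        using gx gy p1 by (simp_all add: z_def)
      then show ?thesis using cmp[OF z] D unfolding A_def B_def by linarith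
    next
      case 2
      then have p1: "pts e' (i - 1) = pts e (a - 1)" "e' i = B"
        using ps[of "i - 1"] iu ab by (auto simp: e'_def t_def A_def B_def)
      define Oo where "Oo = pts e (a - 1)"
      have pa: "pts e a = Oo + A" using pts_pred ab by (simp add: Oo_def A_def)
      have gx2: "gx = fst Oo + u * fst B" and gy2: "y = snd Oo + u * snd B"
        using gx gy p1 by (simp_all add: Oo_def)
      show ?thesis
      proof (cases "u * snd B \<le> snd A")
        case True
        define v where "v = u * snd B / snd A"
        have v: "0 \<le> v" "v \<le> 1" using True Apos Bpos iu by (auto simp: v_def divide_simps)
        have z: "Oo + v *\<^sub>R A \<in> curve n e" using in_curve[OF ab(1) _ v, of n e] ab by (simp add: Oo_def A_def)
        have "snd (Oo + v *\<^sub>R A) = y" using gy2 Apos by (simp add: v_def)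
        then have "fx = fst (Oo + v *\<^sub>R A)" using curve_unique[OF cone f, of "fst (Oo + v *\<^sub>R A)"] z
          by (metis prod.collapse)
        also have "\<dots> = fst Oo + u * (fst A * snd B / snd A)" by (simp add: v_def)
        also have "\<dots> \<le> fst Oo + u * fst B"
        proof -
          have "fst A * snd B / snd A \<le> fst B" using S Apos
            by (simp add: A_def B_def pos_divide_le_eq mult.commute)
          then have "u * (fst A * snd B / snd A) \<le> u * fst B" by (rule mult_left_mono[OF _ iu(3)])
          then show ?thesis by simp
        qed
        finally show ?thesis using gx2 by simp
      next
        case False
        have z: "Oo + A \<in> curve n e" using in_curve[OF ab(1) _ _ order_refl, of n e] ab by (simp add: Oo_def A_def)
        have "\<bar>fx - fst (Oo + A)\<bar> \<le> \<bar>y - snd (Oo + A)\<bar>" by (rule cmp[OF z])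
        then have h: "fx \<le> fst Oo + fst A + (u * snd B - snd A)" using gy2 False by simp
        have "u * (snd B - fst B) \<le> snd B - fst B" using Bc iu by (simp add: mult_left_le_one_le)
        then show ?thesis using h gx2 D unfolding A_def B_def by (simp add: algebra_simps)
      qed
    next
      case 3
      then have p1: "pts e' (i - 1) = pts e (b - 1) + (B - A)" "e' i = A"
        using ps[of "i - 1"] iu ab by (auto simp: e'_def t_def A_def B_def)
      define Q where "Q = pts e b"
      have pb: "Q = pts e (b - 1) + B" using pts_pred ab by (simp add: Q_def B_def)
      define r where "r = 1 - u"
      have r: "0 \<le> r" "r \<le> 1" using iu by (auto simp: r_def)
      have gx2: "gx = fst Q - r * fst A" and gy2: "y = snd Q - r * snd A"
      proof -
        have q: "pts e' (i - 1) = Q - A" using p1 pb by (simp add: algebra_simps)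
        from gx have "gx = fst (Q - A) + u * fst A" unfolding q p1(2) .
        then show "gx = fst Q - r * fst A" by (simp add: r_def algebra_simps)
        from gy have "y = snd (Q - A) + u * snd A" unfolding q p1(2) .
        then show "y = snd Q - r * snd A" by (simp add: r_def algebra_simps)
      qed
      show ?thesis
      proof (cases "r * snd A \<le> snd B")
        case True
        define v where "v = r * snd A / snd B"
        have v: "0 \<le> v" "v \<le> 1" using True Apos Bpos r by (auto simp: v_def divide_simps)
        have v': "0 \<le> 1 - v" "1 - v \<le> 1" using v by auto
        have z: "pts e (b - 1) + (1 - v) *\<^sub>R B \<in> curve n e"
          using in_curve[OF _ ab(3) v', of e] ab by (simp add: B_def)
        have zq: "pts e (b - 1) + (1 - v) *\<^sub>R B = Q - v *\<^sub>R B" using pb by (simp add: algebra_simps)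
        have "snd (Q - v *\<^sub>R B) = y" using gy2 Bpos by (simp add: v_def)
        then have "fx = fst (Q - v *\<^sub>R B)" using curve_unique[OF cone f, of "fst (Q - v *\<^sub>R B)"] z zq
          by (metis prod.collapse)
        also have "\<dots> = fst Q - r * (snd A * fst B / snd B)" by (simp add: v_def)
        also have "\<dots> \<le> fst Q - r * fst A"
        proof -
          have "fst A \<le> snd A * fst B / snd B" using S Bpos
            by (simp add: A_def B_def pos_le_divide_eq mult.commute)
          then have "r * fst A \<le> r * (snd A * fst B / snd B)" by (rule mult_left_mono[OF _ r(1)])
          then show ?thesis by simp
        qed
        finally show ?thesis using gx2 by simp
      next
        case False
        have z: "pts e (b - 1) \<in> curve n e" using in_curve[OF _ ab(3) order_refl, of e] ab by simp
        have "\<bar>fx - fst (pts e (b - 1))\<bar> \<le> \<bar>y - snd (pts e (b - 1))\<bar>" by (rule cmp[OF z])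
        moreover have "snd (pts e (b - 1)) = snd Q - snd B" "fst (pts e (b - 1)) = fst Q - fst B"
          using pb by simp_all
        ultimately have h: "fx \<le> fst Q - fst B + (r * snd A - snd B)" using gy2 False by simp
        have "r * (snd A + fst A) \<le> snd A + fst A" using Ac r by (simp add: mult_left_le_one_le)
        then show ?thesis using h gx2 D unfolding A_def B_def by (simp add: algebra_simps)
      qed
    qed
  qed
  then show ?thesis using Hf Hg by (simp add: e'_def t_def)
qed



lemma trig1:
  assumes "pi/4 \<le> t" "t \<le> 3*pi/4"
  shows "\<bar>cos t\<bar> \<le> sin t"
proof -
  have h1: "sin (t - pi/4) = sqrt 2 / 2 * (sin t - cos t)"
    by (simp add: sin_diff sin_45 cos_45 algebra_simps)
  have h2: "cos (t - pi/4) = sqrt 2 / 2 * (cos t + sin t)"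
    by (simp add: cos_diff sin_45 cos_45 algebra_simps)
  have "0 \<le> sin (t - pi/4)" using assms by (intro sin_ge_zero) auto
  moreover have "0 \<le> cos (t - pi/4)" using assms by (intro cos_ge_zero) auto
  moreover have "sqrt 2 / 2 > (0::real)" by simp
  ultimately have "0 \<le> sin t - cos t" "0 \<le> cos t + sin t"
    unfolding h1 h2 by (simp_all add: zero_le_mult_iff)
  then show ?thesis by linarith
qed

lemma trig2:
  assumes "pi/4 \<le> s" "s \<le> t" "t \<le> 3*pi/4"
  shows "\<bar>sin t - sin s\<bar> \<le> cos s - cos t"
proof -
  have e1: "sin t - sin s = 2 * sin ((t - s) / 2) * cos ((t + s) / 2)" by (rule sin_diff_sin)
  have e2: "cos s - cos t = 2 * sin ((t + s) / 2) * sin ((t - s) / 2)"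
    using cos_diff_cos[of s t] by (simp add: add.commute)
  have X: "0 \<le> sin ((t - s) / 2)" using assms by (intro sin_ge_zero) auto
  have M: "\<bar>cos ((t + s) / 2)\<bar> \<le> sin ((t + s) / 2)" using assms by (intro trig1) auto
  have "\<bar>sin t - sin s\<bar> = 2 * sin ((t - s) / 2) * \<bar>cos ((t + s) / 2)\<bar>"
    unfolding e1 using X by (simp add: abs_mult)
  also have "\<dots> \<le> 2 * sin ((t - s) / 2) * sin ((t + s) / 2)"
    using X M by (intro mult_left_mono) auto
  also have "\<dots> = cos s - cos t" unfolding e2 by simp
  finally show ?thesis .
qed

lemma trig3:
  assumes "s \<le> t" "t \<le> s + pi"
  shows "sin s * cos t \<le> cos s * sin t"
proof -
  have "0 \<le> sin (t - s)" using assms by (intro sin_ge_zero) auto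
  then show ?thesis by (simp add: sin_diff algebra_simps)
qed

lemma theta_eq:
  "theta n (pi/4) k = real (k - 1) / real (n - 1) * (pi/2) + pi/4"
  by (simp add: theta_def)

lemma theta_range:
  assumes n: "n \<ge> 2" and k: "k \<in> {1..n}"
  shows "pi/4 \<le> theta n (pi/4) k \<and> theta n (pi/4) k \<le> 3*pi/4"
proof -
  have pos: "real (n - 1) > 0" using n by simp
  have le: "real (k - 1) \<le> real (n - 1)" using k by simp
  define q where "q = real (k - 1) / real (n - 1)"
  have eq: "theta n (pi/4) k = q * (pi/2) + pi/4" unfolding q_def by (rule theta_eq)
  have "q \<le> 1" using le pos by (simp add: q_def divide_le_eq)
  then have a: "q * (pi/2) \<le> 1 * (pi/2)" by (intro mult_right_mono) auto
  have "0 \<le> q" by (simp add: q_def)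
  then have b: "0 \<le> q * (pi/2)" by simp
  show ?thesis unfolding eq using a b by linarith
qed

lemma theta_mono:
  assumes n: "n \<ge> 2" and km: "k \<le> m"
  shows "theta n (pi/4) k \<le> theta n (pi/4) m"
proof -
  have pos: "real (n - 1) > 0" using n by simp
  have "real (k - 1) \<le> real (m - 1)" using km by simp
  then have "real (k - 1) / real (n - 1) \<le> real (m - 1) / real (n - 1)"
    using pos by (simp add: divide_right_mono)
  then have "real (k - 1) / real (n - 1) * (pi/2) \<le> real (m - 1) / real (n - 1) * (pi/2)"
    by (rule mult_right_mono) simp
  then show ?thesis unfolding theta_eq by (rule add_right_mono)
qed

lemma beta_cone:
  assumes "n \<ge> 2" "k \<in> {1..n}"
  shows "\<bar>fst (beta n (pi/4) k)\<bar> \<le> snd (beta n (pi/4) k) \<and> snd (beta n (pi/4) k) > 0"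
proof -
  have r: "pi/4 \<le> theta n (pi/4) k" "theta n (pi/4) k \<le> 3*pi/4" using theta_range[OF assms] by auto
  have "sin (theta n (pi/4) k) > 0" using r pi_gt_zero by (intro sin_gt_zero; linarith)
  then show ?thesis using trig1[OF r] by (simp add: beta_def)
qed

lemma beta_pair:
  assumes n: "n \<ge> 2" and k: "k \<in> {1..n}" and m: "m \<in> {1..n}" and km: "k \<le> m"
  shows "\<bar>snd (beta n (pi/4) m) - snd (beta n (pi/4) k)\<bar> \<le> fst (beta n (pi/4) m) - fst (beta n (pi/4) k)"
    and "fst (beta n (pi/4) k) * snd (beta n (pi/4) m) \<le> fst (beta n (pi/4) m) * snd (beta n (pi/4) k)"
proof -
  let ?s = "theta n (pi/4) k" and ?t = "theta n (pi/4) m"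
  have r1: "pi/4 \<le> ?s" "?s \<le> 3*pi/4" using theta_range[OF n k] by auto
  have r2: "pi/4 \<le> ?t" "?t \<le> 3*pi/4" using theta_range[OF n m] by auto
  have st: "?s \<le> ?t" by (rule theta_mono[OF n km])
  show "\<bar>snd (beta n (pi/4) m) - snd (beta n (pi/4) k)\<bar> \<le> fst (beta n (pi/4) m) - fst (beta n (pi/4) k)"
    using trig2[OF r1(1) st r2(2)] by (simp add: beta_def)
  have "sin ?s * cos ?t \<le> cos ?s * sin ?t" using r1 r2 st by (intro trig3) auto
  then show "fst (beta n (pi/4) k) * snd (beta n (pi/4) m) \<le> fst (beta n (pi/4) m) * snd (beta n (pi/4) k)"
    by (simp add: beta_def mult.commute)
qed

lemma border_curve: "border n \<alpha> w = curve n (\<lambda>j. beta n \<alpha> (inv w j))"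
  by (simp add: border_def curve_def bpt_def pts_def)

lemma height_pts:
  assumes "w permutes {1..n}"
  shows "height n \<alpha> = snd (pts (\<lambda>j. beta n \<alpha> (inv w j)) n)"
proof -
  have b: "bij_betw (inv w) {1..n} {1..n}" using permutes_inv[OF assms] permutes_imp_bij by blast
  have "snd (pts (\<lambda>j. beta n \<alpha> (inv w j)) n) = (\<Sum>j = 1..n. sin (theta n \<alpha> (inv w j)))"
    by (simp add: pts_def snd_sum beta_def)
  also have "\<dots> = (\<Sum>k = 1..n. sin (theta n \<alpha> k))"
    by (rule sum.reindex_bij_betw[OF b, of "\<lambda>k. sin (theta n \<alpha> k)"])
  finally show ?thesis by (simp add: height_def)
qed

lemma step_precedes:
  assumes n: "n \<ge> 2" and w: "w permutes {1..n}" and st: "bruhat_step n w w'"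
  shows "precedes n (pi/4) w w'"
proof -
  obtain a b where ab: "a \<in> {1..n}" "b \<in> {1..n}" "a \<noteq> b"
    and w': "w' = Transposition.transpose a b \<circ> w" and len: "cox_len n w' = cox_len n w + 1"
    using st unfolding bruhat_step_def by blast
  define a0 where "a0 = min a b"
  define b0 where "b0 = max a b"
  have ab0: "a0 \<in> {1..n}" "b0 \<in> {1..n}" "a0 < b0" using ab by (auto simp: a0_def b0_def)
  have tt: "Transposition.transpose a b = Transposition.transpose a0 b0"
    by (cases "a \<le> b") (auto simp: a0_def b0_def transpose_commute)
  define t where "t = Transposition.transpose a0 b0"
  have w'2: "w' = t \<circ> w" using w' tt by (simp add: t_def)
  have tp: "t permutes {1..n}" unfolding t_def using ab0 by (intro permutes_swap_id) auto
  have w'p: "w' permutes {1..n}" using w'2 permutes_compose[OF w tp] by simp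
  define \<sigma> where "\<sigma> = inv w"
  have sp: "\<sigma> permutes {1..n}" unfolding \<sigma>_def by (rule permutes_inv[OF w])
  have sig_lt: "\<sigma> a0 < \<sigma> b0"
  proof (rule ccontr)
    assume "\<not> \<sigma> a0 < \<sigma> b0"
    moreover have "\<sigma> a0 \<noteq> \<sigma> b0" using permutes_inj[OF sp] ab0 by (auto dest: injD)
    ultimately have pq: "\<sigma> b0 < \<sigma> a0" by simp
    define p where "p = \<sigma> b0"
    define q where "q = \<sigma> a0"
    have wp: "w p = b0" "w q = a0" unfolding p_def q_def \<sigma>_def using permutes_inverses(1)[OF w] by auto
    have pin: "p \<in> {1..n}" "q \<in> {1..n}" unfolding p_def q_def using permutes_in_image[OF sp] ab0 by auto
    have comm: "w \<circ> Transposition.transpose p q = w'"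
    proof
      fix x
      have "w x \<noteq> a0" if "x \<noteq> q" using that wp permutes_inj[OF w] by (auto dest: injD)
      moreover have "w x \<noteq> b0" if "x \<noteq> p" using that wp permutes_inj[OF w] by (auto dest: injD)
      ultimately show "(w \<circ> Transposition.transpose p q) x = w' x"
        using wp unfolding w'2 t_def by (auto simp: Transposition.transpose_def)
    qed
    have "card (invs n (w \<circ> Transposition.transpose p q)) < card (invs n w)"
      using invs_transp_lt[of p q n w] pq pin wp ab0 by (simp add: p_def q_def)
    then have "cox_len n w' < cox_len n w" using cox_len_eq[OF w] cox_len_eq[OF w'p] comm by simp
    then show False using len by simp
  qed
  define e where "e = (\<lambda>j. beta n (pi/4) (\<sigma> j))"
  have inv': "inv w' = \<sigma> \<circ> t"
  proof -
    have "inv w' = inv w \<circ> inv t" unfolding w'2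
      by (rule o_inv_distrib) (auto intro: permutes_bij[OF tp] permutes_bij[OF w])
    then show ?thesis by (simp add: \<sigma>_def t_def)
  qed
  have e': "(\<lambda>j. beta n (pi/4) (inv w' j)) = e \<circ> Transposition.transpose a0 b0"
    by (simp add: inv' e_def t_def fun_eq_iff)
  have cone: "\<forall>j\<in>{1..n}. \<bar>fst (e j)\<bar> \<le> snd (e j)" and pos: "\<forall>j\<in>{1..n}. snd (e j) > 0"
    using beta_cone[OF n] permutes_in_image[OF sp] by (auto simp: e_def)
  have sa: "\<sigma> a0 \<in> {1..n}" "\<sigma> b0 \<in> {1..n}" using permutes_in_image[OF sp] ab0 by auto
  have D: "\<bar>snd (e b0) - snd (e a0)\<bar> \<le> fst (e b0) - fst (e a0)"
    and S: "fst (e a0) * snd (e b0) \<le> fst (e b0) * snd (e a0)"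
    using beta_pair[OF n sa(1) sa(2)] sig_lt by (auto simp: e_def)
  show ?thesis unfolding precedes_def
  proof (intro allI impI)
    fix y assume y: "0 \<le> y \<and> y \<le> height n (pi/4)"
    then have y2: "0 \<le> y" "y \<le> snd (pts e n)" using height_pts[OF w] by (auto simp: e_def \<sigma>_def)
    have "Hx (curve n e) y \<le> Hx (curve n (e \<circ> Transposition.transpose a0 b0)) y"
      using compare[OF _ _ _ _ cone pos D S y2] n ab0 by auto
    then show "Hx (border n (pi/4) w) y \<le> Hx (border n (pi/4) w') y"
      unfolding border_curve e' by (simp add: e_def \<sigma>_def)
  qed
qed

lemma main_aux:
  assumes n: "n \<ge> 2" and "(bruhat_step n)\<^sup>+\<^sup>+ u v" and u: "u permutes {1..n}"
  shows "v permutes {1..n} \<and> precedes n (pi/4) u v"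
  using assms(2)
proof (induction rule: tranclp_induct)
  case (base y)
  then have "y permutes {1..n}" unfolding bruhat_step_def
    using permutes_compose[OF u permutes_swap_id] by auto
  then show ?case using step_precedes[OF n u base] by simp
next
  case (step y z)
  then have yp: "y permutes {1..n}" and py: "precedes n (pi/4) u y" by auto
  have "z permutes {1..n}" using step(2) unfolding bruhat_step_def
    using permutes_compose[OF yp permutes_swap_id] by auto
  moreover have "precedes n (pi/4) y z" by (rule step_precedes[OF n yp step(2)])
  ultimately show ?case using py unfolding precedes_def by (meson order_trans)
qed

theorem theorem1p4:
  fixes n :: nat and u v :: "nat \<Rightarrow> nat"
  assumes "n \<ge> 2"
    and "u permutes {1..n}" and "v permutes {1..n}"
    and "bruhat_less n u v"
  shows "precedes n (pi / 4) u v"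
  using main_aux[OF assms(1) _ assms(2)] assms(4) unfolding bruhat_less_def by blast

end
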